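(* Let $p$ be an odd prime, $\tau\in\mathbb{Z}$, and let $m=p^\alpha a$, $l=p^\beta b$ with $a,b$ positive integers not divisible by $p$, $\alpha\geq1$, $\beta\geq0$. Then \[ p^{2\alpha}\ \Big|\ \binom{m}{l}\binom{m\tau+l-1}{m-1}-\binom{m/p}{l/p}\binom{\frac{m\tau+l}{p}-1}{\frac{m}{p}-1}, \] where for $\beta=0$ the second term is defined to be zero.
   Context: Binomial coefficients with negative top argument are defined by $\binom{n}{k}=(-1)^k\binom{-n+k-1}{k}$ for $n<0$, $k\geq0$; for $n\geq0$ they are the usual ones (zero when $k>n$). *)

theory Defs
  imports Main "HOL-Computational_Algebra.Primes"
begin

definition ibinom :: "int \<Rightarrow> nat \<Rightarrow> int" where
  "ibinom n k = (if n \<ge> 0 then int (nat n choose k)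
                 else (-1) ^ k * int (nat (- n + int k - 1) choose k))"

end

theory Submission imports Defs Complex_Main "HOL-Number_Theory.Cong" begin

lemma RB: "(of_int (ibinom x k) :: rat) = of_int x gchoose k"
proof (cases "x \<ge> 0")
  case True
  then have "(of_int (ibinom x k) :: rat) = of_nat (nat x choose k)"
    by (simp add: ibinom_def)
  also have "\<dots> = of_nat (nat x) gchoose k" by (rule binomial_gbinomial)
  also have "(of_nat (nat x) :: rat) = of_int x" using True by simp
  finally show ?thesis .
next
  case False
  then have "(of_int (ibinom x k) :: rat) = (-1)^k * of_nat (nat (- x + int k - 1) choose k)"
    by (simp add: ibinom_def)
  also have "(of_nat (nat (- x + int k - 1) choose k) :: rat) = of_nat (nat (- x + int k - 1)) gchoose k"
    by (rule binomial_gbinomial)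
  also have "(of_nat (nat (- x + int k - 1)) :: rat) = of_nat k - of_int x - 1" using False by simp
  finally show ?thesis by (simp add: gbinomial_negated_upper[of "of_int x :: rat" k])
qed

lemma L0: "ibinom x k * fact k = (\<Prod>i=0..<k. x - int i)"
proof -
  have "(of_int (ibinom x k * fact k) :: rat) = of_int (\<Prod>i=0..<k. x - int i)"
    by (simp add: RB gbinomial_mult_fact' of_int_prod)
  then show ?thesis by (simp only: of_int_eq_iff)
qed

lemma Ia: "(x - int k) * ibinom x k = x * ibinom (x - 1) k"
proof -
  have "(of_int ((x - int k) * ibinom x k) :: rat) = of_int (x * ibinom (x - 1) k)"
    by (simp add: RB gbinomial_absorb_comp)
  then show ?thesis by (simp only: of_int_eq_iff)
qed

lemma Ib: "int (Suc k) * ibinom x (Suc k) = x * ibinom (x - 1) k"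
proof -
  have "(of_int (int (Suc k) * ibinom x (Suc k)) :: rat) = of_int (x * ibinom (x - 1) k)"
    using gbinomial_absorption[of k "of_int x :: rat"] by (simp add: RB)
  then show ?thesis by (simp only: of_int_eq_iff)
qed

lemma Ic: "(x - int k) * ibinom x k = int (Suc k) * ibinom x (Suc k)"
proof -
  have "(of_int ((x - int k) * ibinom x k) :: rat) = of_int (int (Suc k) * ibinom x (Suc k))"
    using gbinomial_mult_1[of "of_int x :: rat" k] by (simp add: RB algebra_simps)
  then show ?thesis by (simp only: of_int_eq_iff)
qed


definition Np :: "nat \<Rightarrow> nat \<Rightarrow> nat set" where
  "Np p n = {i. 1 \<le> i \<and> i < n \<and> \<not> p dvd i}"

lemma Np_finite[simp]: "finite (Np p n)"
  unfolding Np_def by (rule finite_subset[of _ "{..<n}"]) auto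

lemma prod_split_mult:
  fixes f :: "nat \<Rightarrow> int"
  assumes "p > 0" "finite I"
  shows "prod f I = (\<Prod>t\<in>{t. p*t \<in> I}. f (p*t)) * prod f {i\<in>I. \<not> p dvd i}"
proof -
  have fin0: "finite ((\<lambda>t. p*t) -` I)"
    by (rule finite_vimageI) (use assms in \<open>auto simp: inj_on_def\<close>)
  then have fin: "finite {t. p*t \<in> I}" by (simp add: vimage_def)
  have "I = (\<lambda>t. p*t) ` {t. p*t \<in> I} \<union> {i\<in>I. \<not> p dvd i}" by auto
  then have "prod f I = prod f ((\<lambda>t. p*t) ` {t. p*t \<in> I} \<union> {i\<in>I. \<not> p dvd i})" by simp
  also have "\<dots> = prod f ((\<lambda>t. p*t) ` {t. p*t \<in> I}) * prod f {i\<in>I. \<not> p dvd i}"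
    by (rule prod.union_disjoint) (use fin assms in auto)
  also have "prod f ((\<lambda>t. p*t) ` {t. p*t \<in> I}) = (\<Prod>t\<in>{t. p*t \<in> I}. f (p*t))"
    by (subst prod.reindex) (use assms in \<open>auto simp: inj_on_def\<close>)
  finally show ?thesis .
qed

lemma S1:
  assumes "p > 0"
  shows "(\<Prod>i=0..<p*L. int p * X - int i) = int p ^ L * (\<Prod>t=0..<L. X - int t) * (\<Prod>i\<in>Np p (p*L). int p * X - int i)"
proof -
  have e1: "{t. p*t \<in> {0..<p*L}} = {0..<L}" using assms by auto
  have e2: "{i\<in>{0..<p*L}. \<not> p dvd i} = Np p (p*L)" unfolding Np_def by (auto simp: Suc_le_eq intro: Nat.gr0I)
  have e3: "(\<Prod>t=0..<L. int p * X - int (p*t)) = int p ^ L * (\<Prod>t=0..<L. X - int t)"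
  proof -
    have "(\<Prod>t=0..<L. int p * X - int (p*t)) = (\<Prod>t=0..<L. int p * (X - int t))" by (simp add: algebra_simps)
    then show ?thesis by (simp add: prod.distrib)
  qed
  show ?thesis using prod_split_mult[OF assms, of "{0..<p*L}" "\<lambda>i. int p * X - int i"] e1 e2 e3 by simp
qed

lemma S2:
  assumes "p > 0"
  shows "(fact (p*L) :: int) = int p ^ L * fact L * (\<Prod>i\<in>Np p (p*L). int i)"
proof -
  have e1: "{t. p*t \<in> {1..p*L}} = {1..L}" using assms by auto
  have e2: "{i\<in>{1..p*L}. \<not> p dvd i} = Np p (p*L)" unfolding Np_def
    using assms by (auto simp: le_less)
  have e3: "(\<Prod>t=1..L. int (p*t)) = int p ^ L * (\<Prod>t=1..L. int t)"
    by (simp add: prod.distrib)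
  have "(fact (p*L) :: int) = (\<Prod>i=1..p*L. int i)" by (simp add: fact_prod)
  also have "\<dots> = int p ^ L * fact L * (\<Prod>i\<in>Np p (p*L). int i)"
    using prod_split_mult[OF assms, of "{1..p*L}" "\<lambda>i. int i"] e1 e2 e3 by (simp add: fact_prod)
  finally show ?thesis .
qed

lemma S3:
  assumes "p > 0" "M \<ge> 1"
  shows "(\<Prod>i=1..<p*M. int p * X - int i) = int p ^ (M-1) * (\<Prod>t=1..<M. X - int t) * (\<Prod>i\<in>Np p (p*M). int p * X - int i)"
proof -
  have e1: "{t. p*t \<in> {1..<p*M}} = {1..<M}" using assms by auto
  have e2: "{i\<in>{1..<p*M}. \<not> p dvd i} = Np p (p*M)" unfolding Np_def by auto
  have e3: "(\<Prod>t=1..<M. int p * X - int (p*t)) = int p ^ (M-1) * (\<Prod>t=1..<M. X - int t)"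
  proof -
    have "(\<Prod>t=1..<M. int p * X - int (p*t)) = (\<Prod>t=1..<M. int p * (X - int t))" by (simp add: algebra_simps)
    then show ?thesis by (simp add: prod.distrib)
  qed
  show ?thesis using prod_split_mult[OF assms(1), of "{1..<p*M}" "\<lambda>i. int p * X - int i"] e1 e2 e3 by simp
qed

lemma S4:
  assumes "p > 0" "M \<ge> 1"
  shows "(fact (p*M - 1) :: int) = int p ^ (M-1) * fact (M-1) * (\<Prod>i\<in>Np p (p*M). int i)"
proof -
  have e1: "{t. p*t \<in> {1..<p*M}} = {1..<M}" using assms by auto
  have e2: "{i\<in>{1..<p*M}. \<not> p dvd i} = Np p (p*M)" unfolding Np_def by auto
  have e3: "(\<Prod>t=1..<M. int (p*t)) = int p ^ (M-1) * (\<Prod>t=1..<M. int t)"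
    by (simp add: prod.distrib)
  have pm: "p*M \<ge> 1" using assms by simp
  have "{1..p*M-1} = {1..<p*M}" using pm by auto
  then have "(fact (p*M - 1) :: int) = (\<Prod>i=1..<p*M. int i)" by (simp add: fact_prod)
  also have "\<dots> = int p ^ (M-1) * (\<Prod>t=1..<M. int t) * (\<Prod>i\<in>Np p (p*M). int i)"
    using prod_split_mult[OF assms(1), of "{1..<p*M}" "\<lambda>i. int i"] e1 e2 e3 by simp
  also have "{1..<M} = {1..M-1}" using assms by auto
  finally show ?thesis by (simp add: fact_prod)
qed


lemma not2: fixes p i :: nat assumes "prime p" "odd p" "p dvd 2*i" shows "p dvd i"
proof -
  have "p dvd 2 \<or> p dvd i" using assms prime_dvd_mult_nat by blast
  moreover have "\<not> p dvd 2"
  proof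
    assume "p dvd 2" then have "p = 2" using assms(1) primes_dvd_imp_eq[of p 2] by simp
    then show False using assms(2) by simp
  qed
  ultimately show ?thesis by blast
qed

lemma pair_prod:
  fixes f :: "nat \<Rightarrow> int"
  assumes "prime p" "odd p" "n = p*k"
  shows "prod f (Np p n) = (\<Prod>i\<in>{i\<in>Np p n. 2*i < n}. f i * f (n - i))"
proof -
  let ?H = "{i\<in>Np p n. 2*i < n}"
  have pn: "p dvd n" using assms by simp
  have seteq: "Np p n = ?H \<union> (\<lambda>i. n - i) ` ?H"
  proof (intro equalityI subsetI)
    fix x assume x: "x \<in> Np p n"
    show "x \<in> ?H \<union> (\<lambda>i. n - i) ` ?H"
    proof (cases "2*x < n")
      case True then show ?thesis using x by auto
    next
      case False
      have "2*x \<noteq> n"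
      proof
        assume "2*x = n" then have "p dvd 2*x" using pn by simp
        then have "p dvd x" using not2 assms by blast
        then show False using x by (simp add: Np_def)
      qed
      then have gt: "2*x > n" using False by simp
      have "\<not> p dvd (n - x)"
      proof
        assume "p dvd (n - x)"
        then have "p dvd n - (n - x)" using pn dvd_diff_nat by blast
        moreover have "n - (n - x) = x" using x by (simp add: Np_def)
        ultimately show False using x by (simp add: Np_def)
      qed
      then have "n - x \<in> ?H" using x gt by (auto simp: Np_def)
      moreover have "x = n - (n - x)" using x by (simp add: Np_def)
      ultimately show ?thesis by blast
    qed
  next
    fix x assume "x \<in> ?H \<union> (\<lambda>i. n - i) ` ?H"
    then show "x \<in> Np p n"
    proof
      assume "x \<in> ?H" then show ?thesis by simp
    next
      assume "x \<in> (\<lambda>i. n - i) ` ?H"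
      then obtain i where i: "i \<in> ?H" "x = n - i" by blast
      have "\<not> p dvd (n - i)"
      proof
        assume "p dvd (n - i)"
        then have "p dvd n - (n - i)" using pn dvd_diff_nat by blast
        moreover have "n - (n - i) = i" using i by (simp add: Np_def)
        ultimately show False using i by (simp add: Np_def)
      qed
      then show ?thesis using i by (auto simp: Np_def)
    qed
  qed
  have disj: "?H \<inter> (\<lambda>i. n - i) ` ?H = {}" by auto
  have inj: "inj_on (\<lambda>i. n - i) ?H" by (auto simp: inj_on_def Np_def)
  have "prod f (Np p n) = prod f ?H * prod f ((\<lambda>i. n - i) ` ?H)"
    by (subst seteq, rule prod.union_disjoint) (auto intro: finite_subset[OF _ Np_finite])
  also have "prod f ((\<lambda>i. n - i) ` ?H) = (\<Prod>i\<in>?H. f (n - i))"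
    by (subst prod.reindex[OF inj]) simp
  finally show ?thesis by (simp add: prod.distrib)
qed

lemma pair_dvd:
  assumes "prime p" "odd p"
  shows "int p ^ 2 * X * (X - int k) dvd
    (\<Prod>i\<in>Np p (p*k). int p * X - int i) - (\<Prod>i\<in>Np p (p*k). int i)"
proof -
  let ?n = "p*k"
  let ?H = "{i\<in>Np p ?n. 2*i < ?n}"
  let ?c = "int p ^ 2 * X * (X - int k)"
  have 1: "(\<Prod>i\<in>Np p ?n. int p * X - int i) = (\<Prod>i\<in>?H. (int p * X - int i) * (int p * X - int (?n - i)))"
    by (rule pair_prod[OF assms refl])
  have 2: "(\<Prod>i\<in>Np p ?n. int i) = (\<Prod>i\<in>?H. int i * int (?n - i))"
    by (rule pair_prod[OF assms refl])
  have "[(\<Prod>i\<in>?H. (int p * X - int i) * (int p * X - int (?n - i))) = (\<Prod>i\<in>?H. int i * int (?n - i))] (mod ?c)"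
  proof (rule cong_prod)
    fix i assume i: "i \<in> ?H"
    then have e: "int (?n - i) = int p * int k - int i" by (simp add: Np_def of_nat_diff)
    have "(int p * X - int i) * (int p * X - int (?n - i)) = int i * int (?n - i) + ?c"
      unfolding e by (simp add: algebra_simps power2_eq_square)
    then show "[(int p * X - int i) * (int p * X - int (?n - i)) = int i * int (?n - i)] (mod ?c)"
      by (simp add: cong_def)
  qed
  then show ?thesis using 1 2 by (simp add: cong_iff_dvd_diff)
qed

lemma Q_coprime:
  assumes "prime p"
  shows "coprime (int p ^ e) (\<Prod>i\<in>Np p n. int i)"
proof -
  have pi: "prime (int p)" using assms by simp
  have "\<not> int p dvd (\<Prod>i\<in>Np p n. int i)"
    using pi by (subst prime_dvd_prod_iff) (auto simp: Np_def)
  then have "coprime (int p) (\<Prod>i\<in>Np p n. int i)"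
    using pi prime_imp_coprime by blast
  then show ?thesis by simp
qed


lemma K1:
  assumes "p > 0"
  shows "ibinom (int p * X) (p*L) * (\<Prod>i\<in>Np p (p*L). int i)
       = ibinom X L * (\<Prod>i\<in>Np p (p*L). int p * X - int i)"
proof -
  let ?Q = "\<Prod>i\<in>Np p (p*L). int i" and ?P = "\<Prod>i\<in>Np p (p*L). int p * X - int i"
  have "ibinom (int p * X) (p*L) * fact (p*L) = int p ^ L * (\<Prod>t=0..<L. X - int t) * ?P"
    using L0 S1[OF assms] by simp
  also have "(\<Prod>t=0..<L. X - int t) = ibinom X L * fact L" using L0 by simp
  finally have "(int p ^ L * fact L) * (ibinom (int p * X) (p*L) * ?Q) = (int p ^ L * fact L) * (ibinom X L * ?P)"
    using S2[OF assms, of L] by (simp add: algebra_simps)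
  moreover have "int p ^ L * fact L \<noteq> (0::int)" using assms by simp
  ultimately show ?thesis using assms by auto
qed

lemma K2:
  assumes "p > 0" "M \<ge> 1"
  shows "ibinom (int p * S - 1) (p*M - 1) * (\<Prod>i\<in>Np p (p*M). int i)
       = ibinom (S - 1) (M - 1) * (\<Prod>i\<in>Np p (p*M). int p * S - int i)"
proof -
  let ?Q = "\<Prod>i\<in>Np p (p*M). int i" and ?P = "\<Prod>i\<in>Np p (p*M). int p * S - int i"
  obtain n where n: "p*M = Suc n" using assms by (metis Suc_pred nat_0_less_mult_iff less_le_trans zero_less_one)
  obtain r where r: "M = Suc r" using assms by (cases M) auto
  have "ibinom (int p * S - 1) (p*M - 1) * fact (p*M - 1) = (\<Prod>i=0..<n. int p * S - 1 - int i)"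
    using L0 n by simp
  also have "\<dots> = (\<Prod>i=Suc 0..<Suc n. int p * S - int i)"
    by (subst prod.atLeast_Suc_lessThan_Suc_shift) (simp add: algebra_simps)
  also have "\<dots> = int p ^ (M-1) * (\<Prod>t=1..<M. S - int t) * ?P"
    using S3[OF assms, of S] n by simp
  also have "(\<Prod>t=1..<M. S - int t) = (\<Prod>t=0..<r. S - 1 - int t)"
    unfolding r One_nat_def prod.atLeast_Suc_lessThan_Suc_shift by (simp add: algebra_simps)
  also have "\<dots> = ibinom (S - 1) (M - 1) * fact (M - 1)" using L0 r by simp
  finally have "(int p ^ (M-1) * fact (M-1)) * (ibinom (int p * S - 1) (p*M - 1) * ?Q) = (int p ^ (M-1) * fact (M-1)) * (ibinom (S - 1) (M - 1) * ?P)"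
    using S4[OF assms] by (simp add: algebra_simps)
  moreover have "int p ^ (M-1) * fact (M-1) \<noteq> (0::int)" using assms by simp
  ultimately show ?thesis using assms by auto
qed


lemma main_beta:
  assumes "prime p" "odd p" "M \<ge> 1" "L \<ge> 1" "S = int M * \<tau> + int L"
  shows "int p ^ 2 * int M ^ 2 dvd
    (ibinom (int p * int M) (p*L) * ibinom (int p * S - 1) (p*M - 1) - ibinom (int M) L * ibinom (S - 1) (M - 1))
    * ((\<Prod>i\<in>Np p (p*L). int i) * (\<Prod>i\<in>Np p (p*M). int i))"
proof -
  have p0: "p > 0" using assms prime_gt_0_nat by blast
  define A1 where "A1 = ibinom (int p * int M) (p*L)"
  define A2 where "A2 = ibinom (int p * S - 1) (p*M - 1)"
  define B1 where "B1 = ibinom (int M) L"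
  define B2 where "B2 = ibinom (S - 1) (M - 1)"
  define Q1 where "Q1 = (\<Prod>i\<in>Np p (p*L). int i)"
  define Q2 where "Q2 = (\<Prod>i\<in>Np p (p*M). int i)"
  define P1 where "P1 = (\<Prod>i\<in>Np p (p*L). int p * int M - int i)"
  define P2 where "P2 = (\<Prod>i\<in>Np p (p*M). int p * S - int i)"
  have k1: "A1 * Q1 = B1 * P1" unfolding A1_def Q1_def B1_def P1_def by (rule K1[OF p0])
  have k2: "A2 * Q2 = B2 * P2" unfolding A2_def Q2_def B2_def P2_def by (rule K2[OF p0 assms(3)])
  have split: "(A1*A2 - B1*B2) * (Q1*Q2) = B1*B2*(P1 - Q1)*P2 + B1*B2*Q1*(P2 - Q2)"
  proof -
    have "(A1*A2 - B1*B2) * (Q1*Q2) = (A1*Q1)*(A2*Q2) - B1*B2*Q1*Q2" by (simp add: algebra_simps)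
    also have "\<dots> = B1*P1*(B2*P2) - B1*B2*Q1*Q2" using k1 k2 by simp
    finally show ?thesis by (simp add: algebra_simps)
  qed
  obtain u where u: "P1 - Q1 = int p ^ 2 * int M * (int M - int L) * u"
    using pair_dvd[OF assms(1,2), of "int M" L] unfolding P1_def Q1_def by (auto elim: dvdE)
  obtain w where w: "P2 - Q2 = int p ^ 2 * S * (S - int M) * w"
    using pair_dvd[OF assms(1,2), of S M] unfolding P2_def Q2_def by (auto elim: dvdE)
  have ia: "(int M - int L) * B1 = int M * ibinom (int M - 1) L" unfolding B1_def by (rule Ia)
  have ic: "(S - int M) * B2 = int M * ibinom (S - 1) M"
  proof -
    have "(S - 1 - int (M-1)) * ibinom (S - 1) (M-1) = int (Suc (M-1)) * ibinom (S - 1) (Suc (M-1))"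
      by (rule Ic)
    then show ?thesis using assms(3) unfolding B2_def by (simp add: of_nat_diff)
  qed
  have ib: "int L * B1 = int M * ibinom (int M - 1) (L - 1)"
  proof -
    have "int (Suc (L-1)) * ibinom (int M) (Suc (L-1)) = int M * ibinom (int M - 1) (L-1)" by (rule Ib)
    then show ?thesis using assms(4) unfolding B1_def by simp
  qed
  have t1: "B1*B2*(P1 - Q1)*P2 = int p ^ 2 * int M ^ 2 * (ibinom (int M - 1) L * B2 * P2 * u)"
  proof -
    have "B1*B2*(P1 - Q1)*P2 = int p ^ 2 * int M * ((int M - int L) * B1) * B2 * P2 * u"
      unfolding u by (simp add: algebra_simps)
    also have "\<dots> = int p ^ 2 * int M ^ 2 * (ibinom (int M - 1) L * B2 * P2 * u)"
      unfolding ia by (simp add: algebra_simps power2_eq_square)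
    finally show ?thesis .
  qed
  have t2: "B1*B2*Q1*(P2 - Q2) = int p ^ 2 * int M ^ 2 * (Q1 * w * ibinom (S - 1) M * (\<tau> * B1 + ibinom (int M - 1) (L - 1)))"
  proof -
    have "B1*B2*Q1*(P2 - Q2) = int p ^ 2 * Q1 * w * ((S - int M) * B2) * (int M * \<tau> * B1 + int L * B1)"
      unfolding w assms(5) by (simp add: algebra_simps)
    also have "\<dots> = int p ^ 2 * int M ^ 2 * (Q1 * w * ibinom (S - 1) M * (\<tau> * B1 + ibinom (int M - 1) (L - 1)))"
      unfolding ic ib by (simp add: algebra_simps power2_eq_square)
    finally show ?thesis .
  qed
  have "int p ^ 2 * int M ^ 2 dvd (A1*A2 - B1*B2) * (Q1*Q2)"
    unfolding split t1 t2 by (simp add: dvd_add)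
  then show ?thesis unfolding A1_def A2_def B1_def B2_def Q1_def Q2_def .
qed


theorem lemma4p7:
  fixes p a b \<alpha> \<beta> m l :: nat and \<tau> :: int
  assumes "prime p" and "odd p"
    and "a > 0" and "b > 0" and "\<not> p dvd a" and "\<not> p dvd b"
    and "\<alpha> \<ge> 1"
    and "m = p ^ \<alpha> * a" and "l = p ^ \<beta> * b"
  shows "int p ^ (2 * \<alpha>) dvd
           (ibinom (int m) l * ibinom (int m * \<tau> + int l - 1) (m - 1)
            - (if \<beta> = 0 then 0
               else ibinom (int (m div p)) (l div p)
                    * ibinom ((int m * \<tau> + int l) div int p - 1) (m div p - 1)))"
proof -
  have p0: "p > 0" using assms prime_gt_0_nat by blast
  have pi: "prime (int p)" using assms by simp
  have cop: "coprime (int p ^ e) x" if "\<not> int p dvd x" for e x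
  proof -
    have "coprime (int p) x" using pi that prime_imp_coprime by blast
    then show ?thesis by simp
  qed
  show ?thesis
  proof (cases "\<beta> = 0")
    case True
    then have l: "l = b" using assms by simp
    have pm: "int p ^ \<alpha> dvd int m" using assms by simp
    have m1: "m \<ge> 1" using assms p0 by simp
    have lb: "l \<ge> 1" using assms l by simp
    have d1: "int p ^ \<alpha> dvd ibinom (int m) l"
    proof -
      have "int (Suc (l-1)) * ibinom (int m) (Suc (l-1)) = int m * ibinom (int m - 1) (l-1)" by (rule Ib)
      then have "int l * ibinom (int m) l = int m * ibinom (int m - 1) (l-1)" using lb by simp
      then have "int p ^ \<alpha> dvd int l * ibinom (int m) l" using pm by simp
      moreover have "coprime (int p ^ \<alpha>) (int l)"
        by (rule cop) (use assms l in simp)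
      ultimately show ?thesis using coprime_dvd_mult_right_iff by blast
    qed
    have d2: "int p ^ \<alpha> dvd ibinom (int m * \<tau> + int l - 1) (m - 1)"
    proof -
      let ?n = "int m * \<tau> + int l - 1"
      have "int (Suc (m-1)) * ibinom (?n + 1) (Suc (m-1)) = (?n + 1) * ibinom (?n + 1 - 1) (m-1)" by (rule Ib)
      then have "(?n + 1) * ibinom ?n (m-1) = int m * ibinom (?n + 1) m" using m1 by simp
      then have "int p ^ \<alpha> dvd (?n + 1) * ibinom ?n (m-1)" using pm by simp
      moreover have "coprime (int p ^ \<alpha>) (?n + 1)"
      proof (rule cop)
        show "\<not> int p dvd ?n + 1"
        proof
          assume "int p dvd ?n + 1"
          moreover have "int p dvd int m * \<tau>" using assms by simp
          ultimately have "int p dvd (?n + 1) - int m * \<tau>" by (rule dvd_diff)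
          then have "int p dvd int l" by simp
          then have "p dvd b" using l by simp
          then show False using assms(6) by simp
        qed
      qed
      ultimately show ?thesis using coprime_dvd_mult_right_iff by blast
    qed
    have "int p ^ \<alpha> * int p ^ \<alpha> dvd ibinom (int m) l * ibinom (int m * \<tau> + int l - 1) (m - 1)"
      using d1 d2 by (rule mult_dvd_mono)
    then show ?thesis using True by (simp add: power_add[symmetric] mult_2)
  next
    case False
    define M where "M = p ^ (\<alpha>-1) * a"
    define L where "L = p ^ (\<beta>-1) * b"
    define S where "S = int M * \<tau> + int L"
    have mM: "m = p * M" unfolding M_def using assms by (simp add: power_eq_if)
    have lL: "l = p * L" unfolding L_def using assms False by (simp add: power_eq_if)
    have M1: "M \<ge> 1" unfolding M_def using assms p0 by simp
    have L1: "L \<ge> 1" unfolding L_def using assms p0 by simp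
    have e1: "m div p = M" "l div p = L" using mM lL p0 by simp_all
    have e2: "int m * \<tau> + int l = int p * S" unfolding S_def mM lL by (simp add: algebra_simps)
    have e3: "(int m * \<tau> + int l) div int p = S" using e2 p0 by simp
    have md: "int p * int M = int p ^ \<alpha> * int a" using mM assms(8) by (metis of_nat_mult of_nat_power)
    have key: "int p ^ 2 * int M ^ 2 dvd
      (ibinom (int p * int M) (p*L) * ibinom (int p * S - 1) (p*M - 1) - ibinom (int M) L * ibinom (S - 1) (M - 1))
      * ((\<Prod>i\<in>Np p (p*L). int i) * (\<Prod>i\<in>Np p (p*M). int i))"
      by (rule main_beta[OF assms(1,2) M1 L1 S_def])
    have "int p ^ 2 * int M ^ 2 = (int p ^ \<alpha> * int a)^2" using md by (simp add: power_mult_distrib[symmetric])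
    then have "int p ^ (2*\<alpha>) dvd int p ^ 2 * int M ^ 2"
      by (simp add: power_mult_distrib power_mult[symmetric] mult.commute[of 2])
    from this key have k2: "int p ^ (2*\<alpha>) dvd
      (ibinom (int p * int M) (p*L) * ibinom (int p * S - 1) (p*M - 1) - ibinom (int M) L * ibinom (S - 1) (M - 1))
      * ((\<Prod>i\<in>Np p (p*L). int i) * (\<Prod>i\<in>Np p (p*M). int i))" by (rule dvd_trans)
    have "coprime (int p ^ (2*\<alpha>)) ((\<Prod>i\<in>Np p (p*L). int i) * (\<Prod>i\<in>Np p (p*M). int i))"
      using Q_coprime[OF assms(1)] by simp
    then have "int p ^ (2*\<alpha>) dvd
      (ibinom (int p * int M) (p*L) * ibinom (int p * S - 1) (p*M - 1) - ibinom (int M) L * ibinom (S - 1) (M - 1))"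
      using k2 coprime_dvd_mult_left_iff by blast
    moreover have "int m = int p * int M" "int m * \<tau> + int l - 1 = int p * S - 1" using mM e2 by simp_all
    ultimately show ?thesis using False e1 e3 mM lL by simp
  qed
qed

end
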